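(* Let $H=\sum_{i,j=1}^n\left(\tfrac12\mu_{ij}p_ip_j+\tfrac12\kappa_{ij}q_iq_j+\tfrac12\gamma_{ij}p_iq_j+\tfrac12\gamma_{ji}q_ip_j\right)$, where $\mu,\kappa$ are real symmetric $n\times n$ matrices, $\gamma$ is a real $n\times n$ matrix, and $q_i,p_i$ are Hermitian operators with $[p_i,q_j]=-i\delta_{ij}$, $[p_i,p_j]=[q_i,q_j]=0$. Then $H$ is Dirac diagonalizable if and only if its dynamic matrix $D=\Sigma_yM$ is physically diagonalizable.
   Context: $M=\begin{pmatrix}\mu&\gamma\\ \gamma^T&\kappa\end{pmatrix}$ and $\Sigma_y=\begin{pmatrix}0&-iI_n\\ iI_n&0\end{pmatrix}$; with $\phi=(p_1,\dots,p_n,q_1,\dots,q_n)^T$ one has $H=\tfrac12\phi^\dagger M\phi$ and $[\phi_\mu,H]=\sum_\nu D_{\mu\nu}\phi_\nu$. $H$ is Dirac diagonalizable if there exist operators $d_1,\dots,d_n$, each a complex linear combination of $p_1,\dots,p_n,q_1,\dots,q_n$, satisfying $[d_i,d_j^\dagger]=\delta_{ij}$, $[d_i,d_j]=0$, and real numbers $\omega_1,\dots,\omega_n,C$ such that $H=\sum_i\omega_id_i^\dagger d_i+C$. A matrix is physically diagonalizable if it is diagonalizable over $\mathbb{C}$ and all its eigenvalues are real. *)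

theory Defs
  imports "HOL-Analysis.Analysis"
begin

text \<open>Abstract operator algebra: a (nontrivial, since ring_1) ring 'a with complex
 scalars embedded centrally via emb, and an adjoint (dagger) adj.\<close>

definition star_algebra :: "(complex \<Rightarrow> 'a::ring_1) \<Rightarrow> ('a \<Rightarrow> 'a) \<Rightarrow> bool" where
  "star_algebra emb adj \<longleftrightarrow>
     emb 1 = 1 \<and>
     (\<forall>a b. emb (a + b) = emb a + emb b) \<and>
     (\<forall>a b. emb (a * b) = emb a * emb b) \<and>
     (\<forall>a x. emb a * x = x * emb a) \<and>
     (\<forall>x y. adj (x + y) = adj x + adj y) \<and>
     (\<forall>x y. adj (x * y) = adj y * adj x) \<and>
     (\<forall>x. adj (adj x) = x) \<and>
     (\<forall>a. adj (emb a) = emb (cnj a))"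

definition commutator :: "'a::ring \<Rightarrow> 'a \<Rightarrow> 'a" where
  "commutator x y = x * y - y * x"

definition canonical_pq ::
  "(complex \<Rightarrow> 'a::ring_1) \<Rightarrow> ('a \<Rightarrow> 'a) \<Rightarrow> ('n \<Rightarrow> 'a) \<Rightarrow> ('n \<Rightarrow> 'a) \<Rightarrow> bool" where
  "canonical_pq emb adj p q \<longleftrightarrow>
     (\<forall>i. adj (p i) = p i \<and> adj (q i) = q i) \<and>
     (\<forall>i j. commutator (p i) (q j) = emb (if i = j then - \<i> else 0)) \<and>
     (\<forall>i j. commutator (p i) (p j) = 0) \<and>
     (\<forall>i j. commutator (q i) (q j) = 0)"

definition phi :: "('n \<Rightarrow> 'a) \<Rightarrow> ('n \<Rightarrow> 'a) \<Rightarrow> 'n + 'n \<Rightarrow> 'a" where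
  "phi p q k = (case k of Inl i \<Rightarrow> p i | Inr i \<Rightarrow> q i)"

definition hamiltonian ::
  "(complex \<Rightarrow> 'a::ring_1) \<Rightarrow> ('n::finite \<Rightarrow> 'a) \<Rightarrow> ('n \<Rightarrow> 'a) \<Rightarrow>
   real^'n^'n \<Rightarrow> real^'n^'n \<Rightarrow> real^'n^'n \<Rightarrow> 'a" where
  "hamiltonian emb p q \<mu> \<kappa> \<gamma> =
     (\<Sum>i\<in>UNIV. \<Sum>j\<in>UNIV.
        emb (of_real (\<mu> $ i $ j / 2)) * p i * p j
      + emb (of_real (\<kappa> $ i $ j / 2)) * q i * q j
      + emb (of_real (\<gamma> $ i $ j / 2)) * p i * q j
      + emb (of_real (\<gamma> $ j $ i / 2)) * q i * p j)"

definition lin_comb ::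
  "(complex \<Rightarrow> 'a::ring_1) \<Rightarrow> ('n::finite \<Rightarrow> 'a) \<Rightarrow> ('n \<Rightarrow> 'a) \<Rightarrow> ('n + 'n \<Rightarrow> complex) \<Rightarrow> 'a" where
  "lin_comb emb p q c = (\<Sum>k\<in>UNIV. emb (c k) * phi p q k)"

definition dirac_diagonalizable ::
  "(complex \<Rightarrow> 'a::ring_1) \<Rightarrow> ('a \<Rightarrow> 'a) \<Rightarrow> ('n::finite \<Rightarrow> 'a) \<Rightarrow> ('n \<Rightarrow> 'a) \<Rightarrow> 'a \<Rightarrow> bool" where
  "dirac_diagonalizable emb adj p q H \<longleftrightarrow>
     (\<exists>(d :: 'n \<Rightarrow> 'a) (\<omega> :: 'n \<Rightarrow> real) (C :: real).
        (\<forall>i. \<exists>c. d i = lin_comb emb p q c) \<and>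
        (\<forall>i j. commutator (d i) (adj (d j)) = (if i = j then 1 else 0)) \<and>
        (\<forall>i j. commutator (d i) (d j) = 0) \<and>
        H = (\<Sum>i\<in>UNIV. emb (of_real (\<omega> i)) * adj (d i) * d i) + emb (of_real C))"

text \<open>M = [[mu, gamma],[gamma^T, kappa]] and Sigma_y = [[0,-iI],[iI,0]].\<close>
definition block_M :: "real^('n::finite)^'n \<Rightarrow> real^'n^'n \<Rightarrow> real^'n^'n \<Rightarrow> complex^('n + 'n)^('n + 'n)" where
  "block_M \<mu> \<kappa> \<gamma> = (\<chi> k l. of_real (case (k, l) of
       (Inl i, Inl j) \<Rightarrow> \<mu> $ i $ j
     | (Inl i, Inr j) \<Rightarrow> \<gamma> $ i $ j
     | (Inr i, Inl j) \<Rightarrow> \<gamma> $ j $ i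
     | (Inr i, Inr j) \<Rightarrow> \<kappa> $ i $ j))"

definition sigma_y :: "complex^('n::finite + 'n)^('n + 'n)" where
  "sigma_y = (\<chi> k l. case (k, l) of
       (Inl i, Inr j) \<Rightarrow> (if i = j then - \<i> else 0)
     | (Inr i, Inl j) \<Rightarrow> (if i = j then \<i> else 0)
     | _ \<Rightarrow> 0)"

definition dynamic_matrix :: "real^('n::finite)^'n \<Rightarrow> real^'n^'n \<Rightarrow> real^'n^'n \<Rightarrow> complex^('n + 'n)^('n + 'n)" where
  "dynamic_matrix \<mu> \<kappa> \<gamma> = sigma_y ** block_M \<mu> \<kappa> \<gamma>"

definition diagonalizable_C :: "complex^('m::finite)^'m \<Rightarrow> bool" where
  "diagonalizable_C A \<longleftrightarrow>
     (\<exists>P :: complex^'m^'m. invertible P \<and> (\<forall>i j. i \<noteq> j \<longrightarrow> (matrix_inv P ** A ** P) $ i $ j = 0))"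

definition physically_diagonalizable :: "complex^('m::finite)^'m \<Rightarrow> bool" where
  "physically_diagonalizable A \<longleftrightarrow>
     diagonalizable_C A \<and>
     (\<forall>e v. v \<noteq> 0 \<and> A *v v = e *s v \<longrightarrow> e \<in> \<real>)"

end

theory Submission
  imports Defs
begin

definition om :: "complex^('n::finite + 'n) \<Rightarrow> complex^('n + 'n) \<Rightarrow> complex" where
  "om u v = (\<Sum>k\<in>UNIV. \<Sum>l\<in>UNIV. u$k * sigma_y$k$l * v$l)"

definition cv :: "complex^'m \<Rightarrow> complex^'m" where "cv u = (\<chi> k. cnj (u$k))"
definition hf :: "complex^('n::finite + 'n) \<Rightarrow> complex^('n + 'n) \<Rightarrow> complex" where
  "hf u v = om (cv u) v"

lemma sum_UNIV_plus: "(\<Sum>k\<in>(UNIV::('n::finite + 'n) set). f k) = (\<Sum>i\<in>UNIV. f (Inl i)) + (\<Sum>i\<in>UNIV. f (Inr i))"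
proof -
  have "(\<Sum>k\<in>(UNIV::('n + 'n) set). f k) = sum f (UNIV <+> UNIV)" by (simp only: UNIV_Plus_UNIV)
  also have "\<dots> = (\<Sum>i\<in>UNIV. f (Inl i)) + (\<Sum>i\<in>UNIV. f (Inr i))"
    by (subst sum.Plus) (auto simp: comp_def)
  finally show ?thesis .
qed

lemma sy_ll[simp]: "sigma_y $ Inl i $ Inl j = 0" by (simp add: sigma_y_def)
lemma sy_rr[simp]: "sigma_y $ Inr i $ Inr j = 0" by (simp add: sigma_y_def)
lemma sy_lr[simp]: "sigma_y $ Inl i $ Inr j = (if i = j then - \<i> else 0)" by (simp add: sigma_y_def)
lemma sy_rl[simp]: "sigma_y $ Inr i $ Inl j = (if i = j then \<i> else 0)" by (simp add: sigma_y_def)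

lemma cv_cv[simp]: "cv (cv u) = u" by (simp add: cv_def vec_eq_iff)
lemma cv_nth[simp]: "cv u $ k = cnj (u $ k)" by (simp add: cv_def)

locale qsys =
  fixes emb :: "complex \<Rightarrow> 'a::ring_1" and adj :: "'a \<Rightarrow> 'a" and p q :: "'n::finite \<Rightarrow> 'a"
  assumes star: "star_algebra emb adj" and can: "canonical_pq emb adj p q"
begin

lemma emb1: "emb 1 = 1" using star unfolding star_algebra_def by blast
lemma emb_add: "emb (a + b) = emb a + emb b" using star unfolding star_algebra_def by blast
lemma emb_mult: "emb (a * b) = emb a * emb b" using star unfolding star_algebra_def by blast
lemma emb_comm: "emb a * x = x * emb a" using star unfolding star_algebra_def by blast
lemma adj_add: "adj (x + y) = adj x + adj y" using star unfolding star_algebra_def by blast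
lemma adj_mult: "adj (x * y) = adj y * adj x" using star unfolding star_algebra_def by blast
lemma adj_adj: "adj (adj x) = x" using star unfolding star_algebra_def by blast
lemma adj_emb: "adj (emb a) = emb (cnj a)" using star unfolding star_algebra_def by blast

lemma emb0: "emb 0 = 0"
  using emb_add[of 0 0] by simp
lemma emb_minus: "emb (- a) = - emb a"
  using emb_add[of a "-a"] emb0 by (metis add.commute add_eq_0_iff2)
lemma emb_diff: "emb (a - b) = emb a - emb b"
  using emb_add[of a "-b"] emb_minus by simp
lemma emb_sum: "emb (sum f A) = (\<Sum>x\<in>A. emb (f x))"
  by (induction A rule: infinite_finite_induct) (auto simp: emb0 emb_add)
lemma emb_inj: "emb a = emb b \<longleftrightarrow> a = b"
proof
  assume h: "emb a = emb b"
  show "a = b"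
  proof (rule ccontr)
    assume "a \<noteq> b"
    then have "emb ((a - b) * inverse (a - b)) = 1" by (simp add: emb1)
    moreover have "emb (a - b) = 0" using h by (simp add: emb_diff)
    ultimately show False by (simp add: emb_mult)
  qed
qed simp
lemma emb_eq0: "emb a = 0 \<longleftrightarrow> a = 0"
  using emb_inj[of a 0] by (simp add: emb0)

lemma adj0: "adj 0 = 0" using adj_add[of 0 0] by simp
lemma adj_minus: "adj (- x) = - adj x"
  using adj_add[of x "-x"] adj0 by (metis add.commute add_eq_0_iff2)
lemma adj_diff: "adj (x - y) = adj x - adj y"
  using adj_add[of x "-y"] adj_minus by simp
lemma adj_sum: "adj (sum f A) = (\<Sum>x\<in>A. adj (f x))"
  by (induction A rule: infinite_finite_induct) (auto simp: adj0 adj_add)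
lemma adj_embx: "adj (emb a * x) = emb (cnj a) * adj x"
  unfolding adj_mult adj_emb by (rule emb_comm[symmetric])

lemma comm_add1: "commutator (x + y) z = commutator x z + commutator y z"
  by (simp add: commutator_def algebra_simps)
lemma comm_add2: "commutator z (x + y) = commutator z x + commutator z y"
  by (simp add: commutator_def algebra_simps)
lemma comm_diff2: "commutator z (x - y) = commutator z x - commutator z y"
  by (simp add: commutator_def algebra_simps)
lemma comm_sum1: "commutator (sum f A) z = (\<Sum>x\<in>A. commutator (f x) z)"
  by (simp add: commutator_def sum_distrib_left sum_distrib_right sum_subtractf)
lemma comm_sum2: "commutator z (sum f A) = (\<Sum>x\<in>A. commutator z (f x))"
  by (simp add: commutator_def sum_distrib_left sum_distrib_right sum_subtractf)
lemma comm_emb1: "commutator (emb a * x) y = emb a * commutator x y"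
proof -
  have "y * (emb a * x) = emb a * (y * x)" by (metis emb_comm mult.assoc)
  then show ?thesis by (simp add: commutator_def right_diff_distrib mult.assoc)
qed
lemma comm_emb2: "commutator y (emb a * x) = emb a * commutator y x"
proof -
  have "y * (emb a * x) = emb a * (y * x)" by (metis emb_comm mult.assoc)
  then show ?thesis by (simp add: commutator_def right_diff_distrib mult.assoc)
qed
lemma comm_embc: "commutator y (emb a) = 0"
  unfolding commutator_def by (metis emb_comm diff_self)
lemma comm_mult2: "commutator x (y * z) = commutator x y * z + y * commutator x z"
  by (simp add: commutator_def algebra_simps)
lemma comm_anti: "commutator x y = - commutator y x"
  by (simp add: commutator_def)


definition Lv :: "complex^('n + 'n) \<Rightarrow> 'a" where
  "Lv v = (\<Sum>k\<in>UNIV. emb (v$k) * phi p q k)"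

definition Qf :: "complex^('n + 'n)^('n + 'n) \<Rightarrow> 'a" where
  "Qf N = (\<Sum>k\<in>UNIV. \<Sum>l\<in>UNIV. emb (N$k$l) * phi p q k * phi p q l)"

lemma phi_adj: "adj (phi p q k) = phi p q k"
  using can unfolding canonical_pq_def phi_def by (cases k) auto

lemma phi_comm: "commutator (phi p q k) (phi p q l) = emb (sigma_y$k$l)"
proof (cases k; cases l)
  fix i j assume "k = Inl i" "l = Inl j"
  then show ?thesis using can unfolding canonical_pq_def phi_def by (simp add: emb0)
next
  fix i j assume "k = Inl i" "l = Inr j"
  then show ?thesis using can unfolding canonical_pq_def phi_def by simp
next
  fix i j assume "k = Inr i" "l = Inl j"
  then have "commutator (phi p q k) (phi p q l) = - commutator (p j) (q i)"
    using comm_anti unfolding phi_def by simp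
  also have "\<dots> = emb (sigma_y$k$l)" using can \<open>k = Inr i\<close> \<open>l = Inl j\<close>
    unfolding canonical_pq_def by (auto simp: emb_minus emb0)
  finally show ?thesis .
next
  fix i j assume "k = Inr i" "l = Inr j"
  then show ?thesis using can unfolding canonical_pq_def phi_def by (simp add: emb0)
qed

lemma L_comm: "commutator (Lv a) (Lv b) = emb (om a b)"
proof -
  have "commutator (Lv a) (Lv b) = (\<Sum>k\<in>UNIV. \<Sum>l\<in>UNIV. emb (a$k * sigma_y$k$l * b$l))"
    unfolding Lv_def comm_sum1 comm_sum2 comm_emb1 comm_emb2 phi_comm
    by (simp add: emb_mult[symmetric] sum_distrib_left mult_ac) (rule sum.swap)
  then show ?thesis by (simp add: om_def emb_sum)
qed

lemma L_add: "Lv (a + b) = Lv a + Lv b"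
  by (simp add: Lv_def emb_add distrib_right sum.distrib)
lemma L_scale: "Lv (c *s a) = emb c * Lv a"
  by (simp add: Lv_def emb_mult sum_distrib_left mult.assoc)
lemma L_zero: "Lv 0 = 0"
  by (simp add: Lv_def emb0)
lemma L_minus: "Lv (- a) = - Lv a"
  using L_add[of a "-a"] L_zero by (metis add.commute add_eq_0_iff2 neg_eq_iff_add_eq_0 add.right_inverse)
lemma L_diff: "Lv (a - b) = Lv a - Lv b"
  using L_add[of a "-b"] L_minus by simp
lemma L_sum: "Lv (sum f A) = (\<Sum>x\<in>A. Lv (f x))"
  by (induction A rule: infinite_finite_induct) (auto simp: L_zero L_add)

lemma adj_L: "adj (Lv a) = Lv (cv a)"
  by (simp add: Lv_def adj_sum adj_embx phi_adj)

lemma L_comm_phi: "commutator (Lv a) (phi p q m) = emb (\<Sum>k\<in>UNIV. a$k * sigma_y$k$m)"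
  unfolding Lv_def comm_sum1 comm_emb1 phi_comm by (simp add: emb_sum emb_mult)

lemma L_inj: assumes "Lv a = 0" shows "a = 0"
proof -
  have z: "(\<Sum>k\<in>UNIV. a$k * sigma_y$k$m) = 0" for m
    using L_comm_phi[of a m] assms by (simp add: commutator_def emb_eq0)
  have "a $ Inl j = 0" for j
    using z[of "Inr j"] by (simp add: sum_UNIV_plus if_distrib cong: if_cong)
  moreover have "a $ Inr j = 0" for j
    using z[of "Inl j"] by (simp add: sum_UNIV_plus if_distrib cong: if_cong)
  ultimately show ?thesis by (simp add: vec_eq_iff) (metis sum.exhaust)
qed


end


context qsys begin

lemma comm_term: "commutator (phi p q m) (emb n * phi p q k * phi p q l)
   = emb (n * sigma_y$m$k) * phi p q l + emb (n * sigma_y$m$l) * phi p q k"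
proof -
  have "commutator (phi p q m) (emb n * phi p q k * phi p q l)
     = commutator (phi p q m) (emb n * phi p q k) * phi p q l + (emb n * phi p q k) * commutator (phi p q m) (phi p q l)"
    by (rule comm_mult2)
  also have "\<dots> = emb n * emb (sigma_y$m$k) * phi p q l + emb n * (phi p q k * emb (sigma_y$m$l))"
    by (simp add: comm_emb2 phi_comm mult.assoc)
  also have "phi p q k * emb (sigma_y$m$l) = emb (sigma_y$m$l) * phi p q k"
    by (rule emb_comm[symmetric])
  finally show ?thesis by (simp add: emb_mult mult.assoc)
qed

lemma Q_comm: "commutator (phi p q m) (Qf N) = Lv (\<chi> l. \<Sum>k\<in>UNIV. (N$k$l + N$l$k) * sigma_y$m$k)"
proof -
  have 1: "commutator (phi p q m) (Qf N) = (\<Sum>k\<in>UNIV. \<Sum>l\<in>UNIV. emb (N$k$l * sigma_y$m$k) * phi p q l)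
       + (\<Sum>k\<in>UNIV. \<Sum>l\<in>UNIV. emb (N$k$l * sigma_y$m$l) * phi p q k)"
    unfolding Qf_def comm_sum2 comm_term by (simp add: sum.distrib)
  have 2: "(\<Sum>k\<in>UNIV. \<Sum>l\<in>UNIV. emb (N$k$l * sigma_y$m$k) * phi p q l)
      = (\<Sum>l\<in>UNIV. \<Sum>k\<in>UNIV. emb (N$k$l * sigma_y$m$k) * phi p q l)"
    by (rule sum.swap)
  have 4: "(\<Sum>l\<in>UNIV. \<Sum>k\<in>UNIV. emb (N$k$l * sigma_y$m$k) * phi p q l)
      + (\<Sum>l\<in>UNIV. \<Sum>k\<in>UNIV. emb (N$l$k * sigma_y$m$k) * phi p q l)
      = (\<Sum>l\<in>UNIV. emb (\<Sum>k\<in>UNIV. (N$k$l + N$l$k) * sigma_y$m$k) * phi p q l)"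
    by (simp add: emb_sum sum_distrib_right sum.distrib[symmetric] distrib_right emb_add)
  show ?thesis unfolding 1 2 using 4 by (simp add: Lv_def)
qed

lemma Q_add: "Qf (N1 + N2) = Qf N1 + Qf N2"
  by (simp add: Qf_def emb_add distrib_right sum.distrib)
lemma Q_zero: "Qf 0 = 0"
  by (simp add: Qf_def emb0)
lemma Q_minus: "Qf (- N) = - Qf N"
  by (simp add: Qf_def emb_minus sum_negf)
lemma Q_diff: "Qf (N1 - N2) = Qf N1 - Qf N2"
  using Q_add[of N1 "-N2"] Q_minus by simp
lemma Q_sum: "Qf (sum f A) = (\<Sum>x\<in>A. Qf (f x))"
  by (induction A rule: infinite_finite_induct) (auto simp: Q_zero Q_add)
lemma Q_scale: "emb c * Qf N = Qf (\<chi> k l. c * N$k$l)"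
  by (simp add: Qf_def emb_mult sum_distrib_left mult.assoc)

lemma adjL_L: "adj (Lv a) * Lv b = Qf (\<chi> k l. cnj (a$k) * b$l)"
proof -
  have e: "emb x * phi p q k * (emb y * phi p q l) = emb (x * y) * phi p q k * phi p q l" for x y k l
  proof -
    have "phi p q k * (emb y * phi p q l) = emb y * (phi p q k * phi p q l)"
      by (metis emb_comm mult.assoc)
    then show ?thesis by (simp add: emb_mult mult.assoc)
  qed
  show ?thesis
    unfolding adj_L unfolding Lv_def Qf_def sum_distrib_right
    by (simp add: e sum_distrib_left)
qed

lemma Q_scalar:
  assumes h: "\<And>m. commutator (phi p q m) (Qf N) = 0"
  shows "Qf N = emb ((\<Sum>k\<in>UNIV. \<Sum>l\<in>UNIV. N$k$l * sigma_y$k$l) / 2)"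
proof -
  have z: "(\<Sum>k\<in>UNIV. (N$k$l + N$l$k) * sigma_y$m$k) = 0" for m l
    using L_inj[OF h[of m, unfolded Q_comm]] by (simp add: vec_eq_iff)
  have a1: "N$Inr i$l + N$l$Inr i = 0" for i l
    using z[of l "Inl i"] by (simp add: sum_UNIV_plus if_distrib cong: if_cong)
  have a2: "N$Inl i$l + N$l$Inl i = 0" for i l
    using z[of l "Inr i"] by (simp add: sum_UNIV_plus if_distrib cong: if_cong)
  have s0: "N$k$l + N$l$k = 0" for k l
  proof (cases k)
    case (Inl i) then show ?thesis using a2[of i l] by simp
  next
    case (Inr i) then show ?thesis using a1[of i l] by simp
  qed
  have anti: "emb (N$l$k) * x * y = - (emb (N$k$l) * x * y)" for k l x y
  proof -
    have nn: "N$l$k = - N$k$l" using s0[of l k] by (subst eq_neg_iff_add_eq_0) assumption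
    show ?thesis unfolding nn emb_minus by simp
  qed
  have "Qf N = (\<Sum>k\<in>UNIV. \<Sum>l\<in>UNIV. emb (N$l$k) * phi p q l * phi p q k)"
    unfolding Qf_def by (rule sum.swap)
  also have "\<dots> = - (\<Sum>k\<in>UNIV. \<Sum>l\<in>UNIV. emb (N$k$l) * phi p q l * phi p q k)"
  proof -
    have "(\<Sum>k\<in>UNIV. \<Sum>l\<in>UNIV. emb (N$l$k) * phi p q l * phi p q k)
       = (\<Sum>k\<in>UNIV. \<Sum>l\<in>UNIV. - (emb (N$k$l) * phi p q l * phi p q k))"
      by (intro sum.cong refl) (rule anti)
    then show ?thesis by (simp only: sum_negf)
  qed
  finally have e: "Qf N = - (\<Sum>k\<in>UNIV. \<Sum>l\<in>UNIV. emb (N$k$l) * phi p q l * phi p q k)" .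
  have "Qf N + Qf N = Qf N - (\<Sum>k\<in>UNIV. \<Sum>l\<in>UNIV. emb (N$k$l) * phi p q l * phi p q k)"
    by (simp only: diff_conv_add_uminus e[symmetric])
  also have "\<dots> = (\<Sum>k\<in>UNIV. \<Sum>l\<in>UNIV. emb (N$k$l) * phi p q k * phi p q l - emb (N$k$l) * phi p q l * phi p q k)"
    unfolding Qf_def by (simp only: sum_subtractf)
  also have "\<dots> = (\<Sum>k\<in>UNIV. \<Sum>l\<in>UNIV. emb (N$k$l) * commutator (phi p q k) (phi p q l))"
    unfolding commutator_def by (simp only: right_diff_distrib mult.assoc)
  also have "\<dots> = emb (\<Sum>k\<in>UNIV. \<Sum>l\<in>UNIV. N$k$l * sigma_y$k$l)"
    by (simp only: phi_comm emb_sum emb_mult)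
  finally have s2: "Qf N + Qf N = emb (\<Sum>k\<in>UNIV. \<Sum>l\<in>UNIV. N$k$l * sigma_y$k$l)" .
  have e2: "emb 2 = 2" using emb_add[of 1 1] by (simp only: one_add_one emb1)
  have "Qf N = emb (1/2) * (emb 2 * Qf N)"
    by (simp only: mult.assoc[symmetric] emb_mult[symmetric]) (simp add: emb1)
  also have "\<dots> = emb (1/2) * emb (\<Sum>k\<in>UNIV. \<Sum>l\<in>UNIV. N$k$l * sigma_y$k$l)"
    by (simp only: e2 mult_2 s2)
  finally show ?thesis by (simp only: emb_mult[symmetric]) simp
qed

end


definition bl :: "complex^'m \<Rightarrow> complex^'m \<Rightarrow> complex" where
  "bl x y = (\<Sum>k\<in>UNIV. x$k * y$k)"

definition cmat :: "complex^'m^'k \<Rightarrow> complex^'m^'k" where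
  "cmat B = (\<chi> i j. cnj (B$i$j))"

lemma mult_if0[simp]: "(a::complex) * (if P then x else 0) = (if P then a * x else 0)" by simp
lemma mult_if0'[simp]: "(if P then x else 0) * (a::complex) = (if P then x * a else 0)" by simp

lemma om_expand: "om u v = (\<Sum>i\<in>UNIV. \<i> * (u$Inr i * v$Inl i) - \<i> * (u$Inl i * v$Inr i))"
  unfolding om_def sum_UNIV_plus
  by (simp add: sum_subtractf sum_negf mult_ac)

lemma om_bl: "om u v = bl u (sigma_y *v v)"
  unfolding om_def bl_def matrix_vector_mult_def by (simp add: sum_distrib_left mult.assoc)

lemma om_anti: "om u v = - om v u"
  unfolding om_expand by (simp add: sum_negf[symmetric] algebra_simps)

lemma om_cv: "om (cv u) (cv v) = - cnj (om u v)"
  unfolding om_expand by (simp add: sum_negf[symmetric] algebra_simps)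

lemma om_add1: "om (a + b) v = om a v + om b v"
  unfolding om_expand by (simp add: sum.distrib[symmetric] algebra_simps)
lemma om_add2: "om v (a + b) = om v a + om v b"
  unfolding om_expand by (simp add: sum.distrib[symmetric] algebra_simps)
lemma om_scale1: "om (c *s a) v = c * om a v"
  unfolding om_expand by (simp add: sum_distrib_left algebra_simps)
lemma om_scale2: "om v (c *s a) = c * om v a"
  unfolding om_expand by (simp add: sum_distrib_left algebra_simps)
lemma om_zero1: "om 0 v = 0" unfolding om_expand by simp
lemma om_zero2: "om v 0 = 0" unfolding om_expand by simp
lemma om_minus1: "om (- a) v = - om a v"
  unfolding om_expand by (simp add: sum_negf[symmetric] algebra_simps)
lemma om_minus2: "om v (- a) = - om v a"
  unfolding om_expand by (simp add: sum_negf[symmetric] algebra_simps)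
lemma om_diff1: "om (a - b) v = om a v - om b v"
  unfolding om_expand by (simp add: sum_subtractf[symmetric] algebra_simps)
lemma om_diff2: "om v (a - b) = om v a - om v b"
  unfolding om_expand by (simp add: sum_subtractf[symmetric] algebra_simps)
lemma om_sum1: "om (sum f A) v = (\<Sum>x\<in>A. om (f x) v)"
  by (induction A rule: infinite_finite_induct) (auto simp: om_zero1 om_add1)
lemma om_sum2: "om v (sum f A) = (\<Sum>x\<in>A. om v (f x))"
  by (induction A rule: infinite_finite_induct) (auto simp: om_zero2 om_add2)

lemma cv_add: "cv (a + b) = cv a + cv b" by (simp add: vec_eq_iff)
lemma cv_scale: "cv (c *s a) = cnj c *s cv a" by (simp add: vec_eq_iff)
lemma cv_zero: "cv 0 = 0" by (simp add: vec_eq_iff)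
lemma cv_minus: "cv (- a) = - cv a" by (simp add: vec_eq_iff)
lemma cv_diff: "cv (a - b) = cv a - cv b" by (simp add: vec_eq_iff)
lemma cv_sum: "cv (sum f A) = (\<Sum>x\<in>A. cv (f x))"
  by (induction A rule: infinite_finite_induct) (auto simp: cv_zero cv_add)
lemma cv_eq0: "cv a = 0 \<longleftrightarrow> a = 0"
  by (metis cv_cv cv_zero)

lemma hf_herm: "hf u v = cnj (hf v u)"
proof -
  have "cnj (hf v u) = cnj (om (cv v) u)" by (simp add: hf_def)
  also have "\<dots> = - om v (cv u)"
  proof -
    have h1: "om v (cv u) = - cnj (om (cv v) u)" using om_cv[of "cv v" u] by (simp only: cv_cv)
    then show ?thesis by simp
  qed
  also have "\<dots> = om (cv u) v" using om_anti[of v "cv u"] by simp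
  finally show ?thesis by (simp add: hf_def)
qed

lemma hf_add1: "hf (a + b) v = hf a v + hf b v" by (simp add: hf_def cv_add om_add1)
lemma hf_add2: "hf v (a + b) = hf v a + hf v b" by (simp add: hf_def om_add2)
lemma hf_scale1: "hf (c *s a) v = cnj c * hf a v" by (simp add: hf_def cv_scale om_scale1)
lemma hf_scale2: "hf v (c *s a) = c * hf v a" by (simp add: hf_def om_scale2)
lemma hf_zero1: "hf 0 v = 0" by (simp add: hf_def cv_zero om_zero1)
lemma hf_zero2: "hf v 0 = 0" by (simp add: hf_def om_zero2)
lemma hf_diff1: "hf (a - b) v = hf a v - hf b v" by (simp add: hf_def cv_diff om_diff1)
lemma hf_diff2: "hf v (a - b) = hf v a - hf v b" by (simp add: hf_def om_diff2)
lemma hf_sum1: "hf (sum f A) v = (\<Sum>x\<in>A. hf (f x) v)" by (simp add: hf_def cv_sum om_sum1)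
lemma hf_sum2: "hf v (sum f A) = (\<Sum>x\<in>A. hf v (f x))" by (simp add: hf_def om_sum2)
lemma hf_cv: "hf (cv u) (cv v) = - cnj (hf u v)"
  unfolding hf_def using om_cv[of "cv u" v] by (simp only: cv_cv)
lemma om_hf: "om u v = hf (cv u) v" by (simp add: hf_def)

lemma om_nondeg: assumes "\<And>x. om x z = 0" shows "z = 0"
proof -
  have a: "om (axis k 1) z = (case k of Inl i \<Rightarrow> - \<i> * z$Inr i | Inr i \<Rightarrow> \<i> * z$Inl i)" for k
    unfolding om_expand by (cases k) (auto simp: axis_def sum_negf)
  have "z$Inr i = 0" for i using assms[of "axis (Inl i) 1"] a[of "Inl i"] by simp
  moreover have "z$Inl i = 0" for i using assms[of "axis (Inr i) 1"] a[of "Inr i"] by simp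
  ultimately show ?thesis by (simp add: vec_eq_iff) (metis sum.exhaust)
qed

lemma hf_nondeg: assumes "\<And>x. hf x z = 0" shows "z = 0"
  using assms om_nondeg unfolding hf_def by (metis cv_cv)

lemma hf_real: "cnj (hf u u) = hf u u"
  using hf_herm[of u u] by simp


lemma mneg_left: "(- X) ** (Y::'a::comm_ring_1^_^_) = - (X ** Y)"
  by (simp add: matrix_matrix_mult_def vec_eq_iff sum_negf)
lemma mneg_right: "(X::'a::comm_ring_1^_^_) ** (- Y) = - (X ** Y)"
  by (simp add: matrix_matrix_mult_def vec_eq_iff sum_negf)
lemma mvneg: "(- X) *v (v::'a::comm_ring_1^_) = - (X *v v)"
  by (simp add: matrix_vector_mult_def vec_eq_iff sum_negf)
lemma tneg: "transpose (- X) = - transpose X"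
  by (simp add: transpose_def vec_eq_iff)
lemma cmat_neg: "cmat (- X) = - cmat X"
  by (simp add: cmat_def vec_eq_iff)
lemma cmat_mult: "cmat (X ** Y) = cmat X ** cmat Y"
  by (simp add: cmat_def matrix_matrix_mult_def vec_eq_iff)
lemma cmat_T: "cmat (transpose X) = transpose (cmat X)"
  by (simp add: cmat_def transpose_def vec_eq_iff)
lemma cv_mv: "cv (B *v x) = cmat B *v cv x"
  by (simp add: cmat_def matrix_vector_mult_def vec_eq_iff)
lemma bl_mv: "bl x (B *v y) = bl (transpose B *v x) y"
proof -
  have "bl x (B *v y) = (\<Sum>k\<in>UNIV. \<Sum>l\<in>UNIV. x$k * B$k$l * y$l)"
    by (simp add: bl_def matrix_vector_mult_def sum_distrib_left mult.assoc)
  also have "\<dots> = (\<Sum>l\<in>UNIV. \<Sum>k\<in>UNIV. x$k * B$k$l * y$l)" by (rule sum.swap)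
  also have "\<dots> = bl (transpose B *v x) y"
    by (simp add: bl_def matrix_vector_mult_def transpose_def sum_distrib_left sum_distrib_right mult_ac)
  finally show ?thesis .
qed
lemma bl_neg1: "bl (- x) y = - bl x y" by (simp add: bl_def sum_negf)

lemma sy_T: "transpose (sigma_y :: complex^('n::finite + 'n)^('n + 'n)) = - sigma_y"
  by (auto simp: vec_eq_iff transpose_def sigma_y_def split: sum.splits)
lemma sy_c: "cmat (sigma_y :: complex^('n::finite + 'n)^('n + 'n)) = - sigma_y"
  by (auto simp: vec_eq_iff cmat_def sigma_y_def split: sum.splits)
lemma M_T: assumes "transpose \<mu> = \<mu>" "transpose \<kappa> = \<kappa>"
  shows "transpose (block_M \<mu> \<kappa> \<gamma>) = block_M \<mu> \<kappa> \<gamma>"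
proof -
  have a: "\<mu>$j$i = \<mu>$i$j" "\<kappa>$j$i = \<kappa>$i$j" for i j
    using assms by (metis transpose_def vec_lambda_beta)+
  show ?thesis by (auto simp: vec_eq_iff transpose_def block_M_def a split: sum.splits)
qed
lemma M_c: "cmat (block_M \<mu> \<kappa> \<gamma>) = block_M \<mu> \<kappa> \<gamma>"
  by (auto simp: vec_eq_iff cmat_def block_M_def split: sum.splits)

definition Adyn :: "real^('n::finite)^'n \<Rightarrow> real^'n^'n \<Rightarrow> real^'n^'n \<Rightarrow> complex^('n + 'n)^('n + 'n)" where
  "Adyn \<mu> \<kappa> \<gamma> = transpose (dynamic_matrix \<mu> \<kappa> \<gamma>)"

lemma A_cmat: "cmat (Adyn \<mu> \<kappa> \<gamma>) = - Adyn \<mu> \<kappa> \<gamma>"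
  by (simp add: Adyn_def dynamic_matrix_def cmat_T cmat_mult sy_c M_c mneg_left tneg)

lemma A_conj: "Adyn \<mu> \<kappa> \<gamma> *v cv v = - cv (Adyn \<mu> \<kappa> \<gamma> *v v)"
proof -
  have "cv (Adyn \<mu> \<kappa> \<gamma> *v v) = - (Adyn \<mu> \<kappa> \<gamma> *v cv v)"
    by (simp only: cv_mv A_cmat mvneg)
  then show ?thesis by simp
qed

lemma A_om: fixes \<mu> \<kappa> \<gamma> :: "real^('n::finite)^'n" assumes "transpose \<mu> = \<mu>" "transpose \<kappa> = \<kappa>"
  shows "om u (Adyn \<mu> \<kappa> \<gamma> *v v) = - om (Adyn \<mu> \<kappa> \<gamma> *v u) v"
proof -
  let ?S = "sigma_y :: complex^('n + 'n)^('n + 'n)" and ?M = "block_M \<mu> \<kappa> \<gamma>"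
  have MT: "transpose ?M = ?M" using M_T[OF assms] .
  have e0: "?S ** Adyn \<mu> \<kappa> \<gamma> = - (?S ** ?M ** ?S)"
    by (simp only: Adyn_def dynamic_matrix_def matrix_transpose_mul sy_T MT
        mneg_right matrix_mul_assoc)
  have e1: "transpose (?S ** Adyn \<mu> \<kappa> \<gamma>) = - (?S ** ?M ** ?S)"
    by (simp only: e0 tneg matrix_transpose_mul sy_T MT mneg_right mneg_left minus_minus matrix_mul_assoc)
  have e2: "transpose ?S ** Adyn \<mu> \<kappa> \<gamma> = ?S ** ?M ** ?S"
    by (simp only: Adyn_def dynamic_matrix_def matrix_transpose_mul sy_T MT
        mneg_right mneg_left matrix_mul_assoc minus_minus)
  have "om u (Adyn \<mu> \<kappa> \<gamma> *v v) = bl u ((?S ** Adyn \<mu> \<kappa> \<gamma>) *v v)"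
    by (simp only: om_bl matrix_vector_mul_assoc)
  also have "\<dots> = bl (transpose (?S ** Adyn \<mu> \<kappa> \<gamma>) *v u) v" by (rule bl_mv)
  also have "\<dots> = - bl ((?S ** ?M ** ?S) *v u) v" by (simp only: e1 mvneg bl_neg1)
  finally have f: "om u (Adyn \<mu> \<kappa> \<gamma> *v v) = - bl ((?S ** ?M ** ?S) *v u) v" .
  have "om (Adyn \<mu> \<kappa> \<gamma> *v u) v = bl ((transpose ?S ** Adyn \<mu> \<kappa> \<gamma>) *v u) v"
    by (simp only: om_bl bl_mv matrix_vector_mul_assoc)
  then show ?thesis by (simp only: e2 f)
qed

lemma A_hf: fixes \<mu> \<kappa> \<gamma> :: "real^('n::finite)^'n" assumes "transpose \<mu> = \<mu>" "transpose \<kappa> = \<kappa>"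
  shows "hf u (Adyn \<mu> \<kappa> \<gamma> *v v) = hf (Adyn \<mu> \<kappa> \<gamma> *v u) v"
proof -
  have "hf u (Adyn \<mu> \<kappa> \<gamma> *v v) = - om (Adyn \<mu> \<kappa> \<gamma> *v cv u) v"
    unfolding hf_def by (rule A_om[OF assms])
  also have "\<dots> = om (cv (Adyn \<mu> \<kappa> \<gamma> *v u)) v"
    by (simp only: A_conj om_minus1 minus_minus)
  finally show ?thesis by (simp add: hf_def)
qed



lemma mv_scale: "(B::complex^'m^'k) *v (c *s v) = c *s (B *v v)"
  by (simp add: matrix_vector_mult_def vec_eq_iff sum_distrib_left mult_ac)
lemma mv_add: "(B::complex^'m^'k) *v (u + v) = B *v u + B *v v"
  by (simp add: matrix_vector_mult_def vec_eq_iff sum.distrib distrib_left)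
lemma mv_diff: "(B::complex^'m^'k) *v (u - v) = B *v u - B *v v"
  by (simp add: matrix_vector_mult_def vec_eq_iff sum_subtractf right_diff_distrib)
lemma mv_sum: "(B::complex^'m^'k) *v (sum f S) = (\<Sum>x\<in>S. B *v f x)"
  by (induction S rule: infinite_finite_induct) (auto simp: mv_add)

lemma hf_minus1: "hf (- a) v = - hf a v" by (simp add: hf_def cv_minus om_minus1)
lemma hf_minus2: "hf v (- a) = - hf v a" by (simp add: hf_def om_minus2)

definition good :: "complex^('n::finite + 'n)^('n + 'n) \<Rightarrow> nat \<Rightarrow> (nat \<Rightarrow> complex^('n + 'n)) \<Rightarrow> (nat \<Rightarrow> real) \<Rightarrow> bool" where
  "good A k c w \<longleftrightarrow> (\<forall>i<k. A *v c i = complex_of_real (w i) *s c i) \<and>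
     (\<forall>i<k. \<forall>j<k. hf (c i) (c j) = (if i = j then -1 else 0)) \<and>
     (\<forall>i<k. \<forall>j<k. om (c i) (c j) = 0)"

locale hsa =
  fixes A :: "complex^('n::finite + 'n)^('n + 'n)" and R :: "complex^('n + 'n)^('n + 'n)"
    and lam :: "'n + 'n \<Rightarrow> real"
  assumes hA: "\<And>u v. hf u (A *v v) = hf (A *v u) v"
    and cA: "\<And>v. A *v cv v = - cv (A *v v)"
    and Rinv: "invertible R"
    and Reig: "\<And>a. A *v column a R = complex_of_real (lam a) *s column a R"
begin

lemma normalize:
  assumes eig: "A *v z = complex_of_real mu *s z" and nz: "hf z z \<noteq> 0"
    and orth: "\<And>i. i < k \<Longrightarrow> hf (c i) z = 0 \<and> hf (cv (c i)) z = 0"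
  shows "\<exists>z' mu'. A *v z' = complex_of_real mu' *s z' \<and> hf z' z' = -1 \<and>
          (\<forall>i<k. hf (c i) z' = 0 \<and> hf (cv (c i)) z' = 0)"
proof -
  define t where "t = Re (hf z z)"
  have ht: "hf z z = complex_of_real t"
    using hf_real[of z] unfolding t_def by (metis Reals_cnj_iff complex_is_Real_iff of_real_Re)
  have tnz: "t \<noteq> 0" using nz ht by simp
  show ?thesis
  proof (cases "t < 0")
    case True
    define s where "s = 1 / sqrt (- t)"
    have s2: "s * s * t = -1" using True unfolding s_def
      by (simp add: field_simps)
    let ?z = "complex_of_real s *s z"
    have "A *v ?z = complex_of_real mu *s ?z" by (simp add: mv_scale eig mult.commute)
    moreover have "hf ?z ?z = -1"
      unfolding hf_scale1 hf_scale2 ht using s2 by (simp flip: of_real_mult add: mult.assoc)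
    moreover have "\<forall>i<k. hf (c i) ?z = 0 \<and> hf (cv (c i)) ?z = 0"
      using orth by (simp add: hf_scale2)
    ultimately show ?thesis by blast
  next
    case False
    then have tp: "t > 0" using tnz by simp
    define s where "s = 1 / sqrt t"
    have s2: "s * s * t = 1" using tp unfolding s_def
      by (simp add: field_simps)
    let ?z = "complex_of_real s *s cv z"
    have "A *v ?z = complex_of_real (- mu) *s ?z"
      by (simp add: mv_scale cA eig cv_scale)
    moreover have "hf (cv z) (cv z) = - complex_of_real t"
      using hf_cv[of z z] ht by simp
    then have "hf ?z ?z = -1"
      unfolding hf_scale1 hf_scale2 using s2 by (simp flip: of_real_mult add: mult.assoc)
    moreover have "hf (c i) (cv z) = 0 \<and> hf (cv (c i)) (cv z) = 0" if "i < k" for i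
    proof -
      have "hf (c i) (cv z) = - cnj (hf (cv (c i)) z)"
        using hf_cv[of "cv (c i)" z] by (simp only: cv_cv)
      moreover have "hf (cv (c i)) (cv z) = - cnj (hf (c i) z)" by (rule hf_cv)
      ultimately show ?thesis using orth[OF that] by simp
    qed
    then have "\<forall>i<k. hf (c i) ?z = 0 \<and> hf (cv (c i)) ?z = 0"
      by (simp add: hf_scale2)
    ultimately show ?thesis by blast
  qed
qed


lemma eig_cong:
  assumes "A *v u = complex_of_real l *s u" "A *v v = complex_of_real l *s v"
  shows "A *v (u + a *s v) = complex_of_real l *s (u + a *s v)"
  using assms by (simp add: mv_add mv_scale vector_add_ldistrib)

lemma exists_nonnull:
  assumes gd: "good A k c w" and kn: "k < CARD('n)"
  shows "\<exists>z mu. A *v z = complex_of_real mu *s z \<and> hf z z \<noteq> 0 \<and>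
          (\<forall>i<k. hf (c i) z = 0 \<and> hf (cv (c i)) z = 0)"
proof (rule ccontr)
  assume "\<not> ?thesis"
  then have H: "\<And>z mu. A *v z = complex_of_real mu *s z \<Longrightarrow> (\<forall>i<k. hf (c i) z = 0 \<and> hf (cv (c i)) z = 0)
      \<Longrightarrow> hf z z = 0" by blast
  have ceig: "A *v c i = complex_of_real (w i) *s c i" if "i < k" for i
    using gd that unfolding good_def by blast
  have chf: "hf (c i) (c j) = (if i = j then -1 else 0)" if "i < k" "j < k" for i j
    using gd that unfolding good_def by blast
  have com: "om (c i) (c j) = 0" if "i < k" "j < k" for i j
    using gd that unfolding good_def by blast
  have cveig: "A *v cv (c i) = complex_of_real (- w i) *s cv (c i)" if "i < k" for i
    using ceig[OF that] by (simp add: cA cv_scale)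
  have h_c_cvc: "hf (c j) (cv (c i)) = 0" if "i < k" "j < k" for i j
  proof -
    have "hf (c j) (cv (c i)) = - cnj (om (c j) (c i))"
      using om_cv[of "c j" "c i"] by (simp add: hf_def)
    then show ?thesis using com[OF that(2,1)] by simp
  qed
  have h_cvc_c: "hf (cv (c j)) (c i) = 0" if "i < k" "j < k" for i j
    using com[OF that(2,1)] by (simp add: hf_def)
  have h_cvc_cvc: "hf (cv (c j)) (cv (c i)) = (if i = j then 1 else 0)" if "i < k" "j < k" for i j
    using chf[OF that(2,1)] by (simp add: hf_cv)
  define Qp where "Qp v = v + (\<Sum>i<k. hf (c i) v *s c i) - (\<Sum>i<k. hf (cv (c i)) v *s cv (c i))" for v
  have q1: "hf (c j) (Qp v) = 0" if "j < k" for j v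
  proof -
    have "hf (c j) (Qp v) = hf (c j) v + (\<Sum>i<k. hf (c i) v * hf (c j) (c i))
          - (\<Sum>i<k. hf (cv (c i)) v * hf (c j) (cv (c i)))"
      by (simp add: Qp_def hf_add2 hf_diff2 hf_sum2 hf_scale2)
    also have "(\<Sum>i<k. hf (c i) v * hf (c j) (c i)) = - hf (c j) v"
      using that by (simp add: chf if_distrib cong: if_cong)
    also have "(\<Sum>i<k. hf (cv (c i)) v * hf (c j) (cv (c i))) = 0"
      using that by (simp add: h_c_cvc)
    finally show ?thesis by simp
  qed
  have q2: "hf (cv (c j)) (Qp v) = 0" if "j < k" for j v
  proof -
    have "hf (cv (c j)) (Qp v) = hf (cv (c j)) v + (\<Sum>i<k. hf (c i) v * hf (cv (c j)) (c i))
          - (\<Sum>i<k. hf (cv (c i)) v * hf (cv (c j)) (cv (c i)))"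
      by (simp add: Qp_def hf_add2 hf_diff2 hf_sum2 hf_scale2)
    also have "(\<Sum>i<k. hf (c i) v * hf (cv (c j)) (c i)) = 0"
      using that by (simp add: h_cvc_c)
    also have "(\<Sum>i<k. hf (cv (c i)) v * hf (cv (c j)) (cv (c i))) = hf (cv (c j)) v"
      using that by (simp add: h_cvc_cvc if_distrib cong: if_cong)
    finally show ?thesis by simp
  qed
  have q3: "A *v Qp v = Qp (A *v v)" for v
  proof -
    have a1: "hf (c i) (A *v v) = complex_of_real (w i) * hf (c i) v" if "i < k" for i
      using hA[of "c i" v] ceig[OF that] by (simp add: hf_scale1)
    have a2: "hf (cv (c i)) (A *v v) = - complex_of_real (w i) * hf (cv (c i)) v" if "i < k" for i
      using hA[of "cv (c i)" v] cveig[OF that] by (simp add: hf_scale1 hf_minus1)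
    have "A *v Qp v = A *v v + (\<Sum>i<k. hf (c i) v *s (complex_of_real (w i) *s c i))
        - (\<Sum>i<k. hf (cv (c i)) v *s (complex_of_real (- w i) *s cv (c i)))"
      by (simp add: Qp_def mv_add mv_diff mv_sum mv_scale ceig cveig)
    also have "\<dots> = Qp (A *v v)"
      unfolding Qp_def
      by (intro arg_cong2[where f="(-)"] arg_cong2[where f="(+)"] refl sum.cong)
         (auto simp: a1 a2 mult.commute)
    finally show ?thesis .
  qed
  have Qp_add: "Qp (u + v) = Qp u + Qp v" for u v
    by (simp add: Qp_def hf_add2 vec_eq_iff sum_component sum.distrib algebra_simps)
  have Qp_scale: "Qp (a *s v) = a *s Qp v" for a v
    by (simp add: Qp_def hf_scale2 vec_eq_iff sum_component sum_distrib_left algebra_simps)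
  have Qp_zero: "Qp 0 = 0" using Qp_scale[of 0 0] by simp
  have Qp_sum: "Qp (sum f S) = (\<Sum>x\<in>S. Qp (f x))" for f :: "'n + 'n \<Rightarrow> _" and S
    by (induction S rule: infinite_finite_induct) (auto simp: Qp_add Qp_zero)
  define r where "r a = column a R" for a
  have reig: "A *v Qp (r a) = complex_of_real (lam a) *s Qp (r a)" for a
    by (simp add: q3 r_def Reig Qp_scale)
  have rorth: "\<forall>i<k. hf (c i) (Qp (r a)) = 0 \<and> hf (cv (c i)) (Qp (r a)) = 0" for a
    using q1 q2 by blast
  have r2: "hf (Qp (r a)) (Qp (r b)) = 0" for a b
  proof (cases "lam a = lam b")
    case True
    let ?u = "Qp (r a)" and ?v = "Qp (r b)"
    have e1: "A *v (?u + 1 *s ?v) = complex_of_real (lam a) *s (?u + 1 *s ?v)"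
      by (rule eig_cong) (use reig True in auto)
    have e2: "A *v (?u + \<i> *s ?v) = complex_of_real (lam a) *s (?u + \<i> *s ?v)"
      by (rule eig_cong) (use reig True in auto)
    have o1: "\<forall>i<k. hf (c i) (?u + x *s ?v) = 0 \<and> hf (cv (c i)) (?u + x *s ?v) = 0" for x
      using rorth by (simp add: hf_add2 hf_scale2)
    have uu: "hf ?u ?u = 0" using H[OF reig rorth] .
    have vv: "hf ?v ?v = 0" using H[OF reig rorth] .
    have p1: "hf (?u + 1 *s ?v) (?u + 1 *s ?v) = 0" using H[OF e1 o1] .
    have p2: "hf (?u + \<i> *s ?v) (?u + \<i> *s ?v) = 0" using H[OF e2 o1] .
    have s1: "hf ?u ?v + hf ?v ?u = 0"
      using p1 uu vv by (simp add: hf_add1 hf_add2 hf_scale1 hf_scale2) (metis add.commute)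
    have s2: "\<i> * hf ?u ?v - \<i> * hf ?v ?u = 0"
      using p2 uu vv by (simp add: hf_add1 hf_add2 hf_scale1 hf_scale2 algebra_simps)
    then have "hf ?u ?v - hf ?v ?u = 0" by (simp add: right_diff_distrib[symmetric])
    then have "hf ?u ?v = hf ?v ?u" by simp
    with s1 have "2 * hf ?u ?v = 0" by simp
    then show ?thesis by simp
  next
    case False
    have "hf (Qp (r a)) (A *v Qp (r b)) = hf (A *v Qp (r a)) (Qp (r b))" by (rule hA)
    then have "complex_of_real (lam b) * hf (Qp (r a)) (Qp (r b)) = complex_of_real (lam a) * hf (Qp (r a)) (Qp (r b))"
      by (simp add: reig hf_scale1 hf_scale2)
    then show ?thesis using False by simp
  qed
  have r3: "hf (Qp x) (Qp y) = 0" for x y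
  proof -
    have dec: "z = (\<Sum>a\<in>UNIV. (matrix_inv R *v z) $ a *s r a)" for z
    proof -
      have "z = R *v (matrix_inv R *v z)"
        using Rinv by (simp add: matrix_vector_mul_assoc invertible_def matrix_inv_def)
          (metis (mono_tags, lifting) someI_ex matrix_vector_mul_lid)
      then show ?thesis by (simp add: matrix_mult_sum r_def)
    qed
    have "hf (Qp x) (Qp y) = hf (\<Sum>a\<in>UNIV. (matrix_inv R *v x) $ a *s Qp (r a)) (\<Sum>b\<in>UNIV. (matrix_inv R *v y) $ b *s Qp (r b))"
      by (subst dec[of x], subst dec[of y]) (simp add: Qp_sum Qp_scale)
    also have "\<dots> = 0" by (simp add: hf_sum1 hf_sum2 hf_scale1 hf_scale2 r2)
    finally show ?thesis .
  qed
  have r4: "Qp y = 0" for y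
  proof (rule hf_nondeg)
    fix x
    have "x - Qp x = (\<Sum>i<k. hf (cv (c i)) x *s cv (c i)) - (\<Sum>i<k. hf (c i) x *s c i)"
      by (simp add: Qp_def)
    then have "hf (x - Qp x) (Qp y) = 0"
      by (simp add: hf_diff1 hf_sum1 hf_scale1 q1 q2)
    then show "hf x (Qp y) = 0" using r3[of x y] by (simp add: hf_diff1)
  qed
  define B where "B = c ` {..<k} \<union> (\<lambda>i. cv (c i)) ` {..<k}"
  have "y \<in> vec.span B" for y
  proof -
    have "y = (\<Sum>i<k. hf (cv (c i)) y *s cv (c i)) - (\<Sum>i<k. hf (c i) y *s c i)"
      using r4[of y] unfolding Qp_def by (simp add: algebra_simps)
    also have "\<dots> \<in> vec.span B"
      unfolding B_def
      by (intro vec.span_diff vec.span_sum vec.span_scale vec.span_base) auto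
    finally show ?thesis .
  qed
  then have "vec.dim (UNIV :: (complex^('n+'n)) set) \<le> card B"
    by (intro vec.dim_le_card) (auto simp: B_def)
  also have "card B \<le> k + k"
  proof -
    have "card (c ` {..<k}) \<le> k" using card_image_le[of "{..<k}" c] by simp
    moreover have "card ((\<lambda>i. cv (c i)) ` {..<k}) \<le> k" using card_image_le[of "{..<k}" "\<lambda>i. cv (c i)"] by simp
    ultimately show ?thesis unfolding B_def using card_Un_le[of "c ` {..<k}" "(\<lambda>i. cv (c i)) ` {..<k}"] by linarith
  qed
  finally have "CARD('n + 'n) \<le> k + k" by (simp add: vec.dim_UNIV card_cart_basis)
  then show False using kn by simp
qed


lemma extend:
  assumes gd: "good A k c w" and kn: "k < CARD('n)"
  shows "\<exists>c' w'. good A (Suc k) c' w'"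
proof -
  obtain z0 mu0 where "A *v z0 = complex_of_real mu0 *s z0" "hf z0 z0 \<noteq> 0"
      "\<forall>i<k. hf (c i) z0 = 0 \<and> hf (cv (c i)) z0 = 0"
    using exists_nonnull[OF gd kn] by blast
  then obtain z mu where z: "A *v z = complex_of_real mu *s z" "hf z z = -1"
      and zo: "\<forall>i<k. hf (c i) z = 0 \<and> hf (cv (c i)) z = 0"
    using normalize[of z0 mu0 k c] by blast
  define c' where "c' = c(k := z)"
  define w' where "w' = w(k := mu)"
  have ceig: "A *v c i = complex_of_real (w i) *s c i" if "i < k" for i
    using gd that unfolding good_def by blast
  have chf: "hf (c i) (c j) = (if i = j then -1 else 0)" if "i < k" "j < k" for i j
    using gd that unfolding good_def by blast
  have com: "om (c i) (c j) = 0" if "i < k" "j < k" for i j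
    using gd that unfolding good_def by blast
  have zc: "hf z (c i) = 0" if "i < k" for i
    using zo that hf_herm[of z "c i"] by simp
  have omcz: "om (c i) z = 0" if "i < k" for i
    using zo that by (simp add: om_hf)
  have omzc: "om z (c i) = 0" if "i < k" for i
    using omcz[OF that] om_anti[of z "c i"] by simp
  have omzz: "om z z = 0"
    using om_anti[of z z] by simp
  have "\<forall>i<Suc k. A *v c' i = complex_of_real (w' i) *s c' i"
    using ceig z by (auto simp: c'_def w'_def less_Suc_eq)
  moreover have "\<forall>i<Suc k. \<forall>j<Suc k. hf (c' i) (c' j) = (if i = j then -1 else 0)"
    using chf z zo zc by (auto simp: c'_def less_Suc_eq)
  moreover have "\<forall>i<Suc k. \<forall>j<Suc k. om (c' i) (c' j) = 0"
    using com omcz omzc omzz by (auto simp: c'_def less_Suc_eq)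
  ultimately show ?thesis unfolding good_def by blast
qed

lemma build: "k \<le> CARD('n) \<Longrightarrow> \<exists>c w. good A k c w"
proof (induction k)
  case 0
  then show ?case by (simp add: good_def)
next
  case (Suc k)
  then obtain c w where "good A k c w" by auto
  then show ?case using extend Suc.prems by auto
qed

end


lemma minv: fixes X :: "'a::field^'n^'n" assumes "invertible X"
  shows "X ** matrix_inv X = mat 1" "matrix_inv X ** X = mat 1"
proof -
  have "\<exists>Y. X ** Y = mat 1 \<and> Y ** X = mat 1" using assms unfolding invertible_def by blast
  then have "X ** matrix_inv X = mat 1 \<and> matrix_inv X ** X = mat 1"
    unfolding matrix_inv_def by (rule someI_ex)
  then show "X ** matrix_inv X = mat 1" "matrix_inv X ** X = mat 1" by auto
qed

lemma minv_unique: fixes X :: "'a::field^'n^'n" assumes "X ** Y = mat 1" "Y ** X = mat 1"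
  shows "matrix_inv X = Y"
proof -
  have inv: "invertible X" using assms unfolding invertible_def by blast
  have "matrix_inv X = matrix_inv X ** (X ** Y)" using assms by simp
  also have "\<dots> = Y" by (simp add: matrix_mul_assoc minv[OF inv])
  finally show ?thesis .
qed

lemma transpose_inv: fixes X :: "'a::field^'n^'n" assumes "X ** Y = mat 1"
  shows "transpose Y ** transpose X = mat 1"
  using assms by (metis matrix_transpose_mul transpose_mat)

lemma column_mult: "column a (X ** Y) = X *v column a Y"
  by (simp add: column_def matrix_matrix_mult_def matrix_vector_mult_def vec_eq_iff)

lemma diag_mult_column:
  fixes X L :: "complex^'n::finite^'n"
  assumes "\<And>a b. a \<noteq> b \<Longrightarrow> L$a$b = 0"
  shows "column a (X ** L) = L$a$a *s column a X"
proof -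
  have "(\<Sum>k\<in>UNIV. X$i$k * L$k$a) = X$i$a * L$a$a" for i
    by (rule trans[OF sum.remove[of UNIV a]]) (auto simp: assms)
  then show ?thesis by (simp add: column_def matrix_matrix_mult_def vec_eq_iff mult.commute)
qed

lemma diag_transpose:
  assumes "\<And>a b. a \<noteq> b \<Longrightarrow> L$a$b = 0"
  shows "transpose L = L"
  using assms by (auto simp: transpose_def vec_eq_iff) (metis)

definition colW :: "('n::finite \<Rightarrow> complex^('n + 'n)) \<Rightarrow> 'n + 'n \<Rightarrow> complex^('n + 'n)" where
  "colW c l = (case l of Inl i \<Rightarrow> c i | Inr i \<Rightarrow> cv (c i))"

definition Wm :: "('n::finite \<Rightarrow> complex^('n + 'n)) \<Rightarrow> complex^('n + 'n)^('n + 'n)" where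
  "Wm c = (\<chi> k l. colW c l $ k)"

definition Km :: "('n::finite \<Rightarrow> complex^('n + 'n)) \<Rightarrow> complex^('n + 'n)^('n + 'n)" where
  "Km c = (\<chi> a k. case a of Inl i \<Rightarrow> (sigma_y *v cv (c i))$k | Inr i \<Rightarrow> - (sigma_y *v c i)$k)"

lemma column_Wm: "column l (Wm c) = colW c l"
  by (simp add: column_def Wm_def vec_eq_iff)

lemma KW:
  fixes c :: "'n::finite \<Rightarrow> complex^('n + 'n)"
  assumes o1: "\<And>i j. om (c i) (cv (c j)) = (if i = j then 1 else 0)"
    and o2: "\<And>i j. om (c i) (c j) = 0"
  shows "Km c ** Wm c = mat 1"
proof -
  have e: "(Km c ** Wm c)$a$b = (case a of Inl i \<Rightarrow> om (colW c b) (cv (c i)) | Inr i \<Rightarrow> - om (colW c b) (c i))" for a b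
    by (cases a) (auto simp: matrix_matrix_mult_def Km_def Wm_def om_bl bl_def mult.commute sum_negf)
  have o3: "om (cv (c j)) (cv (c i)) = 0" for i j using om_cv[of "c j" "c i"] o2 by simp
  have o4: "om (cv (c j)) (c i) = - (if i = j then 1 else 0)" for i j using om_anti[of "cv (c j)" "c i"] o1 by simp
  show ?thesis
    by (auto simp: vec_eq_iff e mat_def colW_def o1 o2 o3 o4 split: sum.splits)
qed

lemma Wm_inv:
  fixes c :: "'n::finite \<Rightarrow> complex^('n + 'n)"
  assumes o1: "\<And>i j. om (c i) (cv (c j)) = (if i = j then 1 else 0)"
    and o2: "\<And>i j. om (c i) (c j) = 0"
  shows "Wm c ** Km c = mat 1" "invertible (Wm c)"
  using KW[OF o1 o2] matrix_left_right_inverse invertible_left_inverse by blast+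

lemma Wm_span:
  fixes c :: "'n::finite \<Rightarrow> complex^('n + 'n)"
  assumes o1: "\<And>i j. om (c i) (cv (c j)) = (if i = j then 1 else 0)"
    and o2: "\<And>i j. om (c i) (c j) = 0"
  shows "v = (\<Sum>l\<in>UNIV. (Km c *v v)$l *s colW c l)"
proof -
  have "v = Wm c *v (Km c *v v)"
    by (simp add: matrix_vector_mul_assoc Wm_inv(1)[OF o1 o2])
  then show ?thesis by (simp add: matrix_mult_sum column_Wm)
qed



definition Mh :: "real^('n::finite)^'n \<Rightarrow> real^'n^'n \<Rightarrow> real^'n^'n \<Rightarrow> complex^('n + 'n)^('n + 'n)" where
  "Mh \<mu> \<kappa> \<gamma> = (\<chi> k l. block_M \<mu> \<kappa> \<gamma> $ k $ l / 2)"

context qsys begin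

lemma L_axis: "Lv (axis m 1) = phi p q m"
proof -
  have "Lv (axis m 1) = (\<Sum>k\<in>UNIV. if k = m then phi p q k else 0)"
    unfolding Lv_def by (intro sum.cong refl) (simp add: axis_def emb1 emb0)
  then show ?thesis by simp
qed

lemma ham_Q: "hamiltonian emb p q \<mu> \<kappa> \<gamma> = Qf (Mh \<mu> \<kappa> \<gamma>)"
  unfolding hamiltonian_def Qf_def Mh_def sum_UNIV_plus
  by (simp add: block_M_def phi_def sum.distrib add_ac)

lemma LQ:
  fixes \<mu> \<kappa> \<gamma> :: "real^'n^'n"
  assumes "transpose \<mu> = \<mu>" "transpose \<kappa> = \<kappa>"
  shows "commutator (Lv c) (Qf (Mh \<mu> \<kappa> \<gamma>)) = Lv (Adyn \<mu> \<kappa> \<gamma> *v c)"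
proof -
  let ?M = "block_M \<mu> \<kappa> \<gamma>"
  define w where "w m = (\<chi> l. \<Sum>k\<in>UNIV. (Mh \<mu> \<kappa> \<gamma>$k$l + Mh \<mu> \<kappa> \<gamma>$l$k) * sigma_y$m$k)" for m
  have Ms: "?M$l$k = ?M$k$l" for k l
  proof -
    have "transpose ?M $ k $ l = ?M $ k $ l" using M_T[OF assms, of \<gamma>] by simp
    then show ?thesis by (simp add: transpose_def)
  qed
  have "commutator (Lv c) (Qf (Mh \<mu> \<kappa> \<gamma>)) = (\<Sum>m\<in>UNIV. emb (c$m) * Lv (w m))"
    unfolding Lv_def[of c] comm_sum1 comm_emb1 Q_comm w_def ..
  also have "\<dots> = Lv (\<Sum>m\<in>UNIV. c$m *s w m)"
    by (simp add: L_sum L_scale)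
  also have "(\<Sum>m\<in>UNIV. c$m *s w m) = Adyn \<mu> \<kappa> \<gamma> *v c"
  proof -
    have mh: "Mh \<mu> \<kappa> \<gamma>$k$l + Mh \<mu> \<kappa> \<gamma>$l$k = ?M$k$l" for k l
      by (simp add: Mh_def Ms)
    have r: "(Adyn \<mu> \<kappa> \<gamma> *v c)$l = (\<Sum>m\<in>UNIV. (\<Sum>k\<in>UNIV. sigma_y$m$k * ?M$k$l) * c$m)" for l
      by (simp add: Adyn_def dynamic_matrix_def transpose_def matrix_matrix_mult_def matrix_vector_mult_def)
    have lft: "(\<Sum>m\<in>UNIV. c$m *s w m)$l = (\<Sum>m\<in>UNIV. c$m * (\<Sum>k\<in>UNIV. ?M$k$l * sigma_y$m$k))" for l
      by (simp add: w_def sum_component mh)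
    show ?thesis unfolding vec_eq_iff r lft
      by (simp add: sum_distrib_left sum_distrib_right mult_ac)
  qed
  finally show ?thesis .
qed

lemma comm_HD:
  assumes "\<And>i. commutator x (d i) = emb (a i)" "\<And>i. commutator x (adj (d i)) = emb (b i)"
  shows "commutator x (\<Sum>i\<in>UNIV. emb (complex_of_real (\<omega> i)) * adj (d i) * d i)
       = (\<Sum>i\<in>UNIV. emb (complex_of_real (\<omega> i) * b i) * d i + emb (complex_of_real (\<omega> i) * a i) * adj (d i))"
proof -
  have "commutator x (emb (complex_of_real (\<omega> i)) * adj (d i) * d i)
     = emb (complex_of_real (\<omega> i) * b i) * d i + emb (complex_of_real (\<omega> i) * a i) * adj (d i)" for i
  proof -
    have "commutator x (emb (complex_of_real (\<omega> i)) * adj (d i) * d i)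
       = emb (complex_of_real (\<omega> i)) * (emb (b i) * d i + adj (d i) * emb (a i))"
      by (simp only: mult.assoc comm_mult2 assms comm_embc mult_zero_left add_0_left)
    also have "adj (d i) * emb (a i) = emb (a i) * adj (d i)" by (rule emb_comm[symmetric])
    finally show ?thesis by (simp add: distrib_left emb_mult mult.assoc)
  qed
  then show ?thesis by (simp add: comm_sum2)
qed

end


lemma mat_eq_cols: "(\<And>l. column l X = column l Y) \<Longrightarrow> X = Y"
  by (simp add: column_def vec_eq_iff)

definition lamW :: "('n \<Rightarrow> real) \<Rightarrow> 'n + 'n \<Rightarrow> complex" where
  "lamW \<omega> a = (case a of Inl i \<Rightarrow> complex_of_real (\<omega> i) | Inr i \<Rightarrow> complex_of_real (- \<omega> i))"

definition Lam :: "('n::finite \<Rightarrow> real) \<Rightarrow> complex^('n + 'n)^('n + 'n)" where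
  "Lam \<omega> = (\<chi> a b. if a = b then lamW \<omega> a else 0)"

lemma Lam_off: "a \<noteq> b \<Longrightarrow> Lam \<omega> $ a $ b = 0" by (simp add: Lam_def)
lemma Lam_diag: "Lam \<omega> $ a $ a = lamW \<omega> a" by (simp add: Lam_def)

lemma matrix_side:
  fixes \<mu> \<kappa> \<gamma> :: "real^('n::finite)^'n" and c :: "'n \<Rightarrow> complex^('n + 'n)"
  assumes o1: "\<And>i j. om (c i) (cv (c j)) = (if i = j then 1 else 0)"
    and o2: "\<And>i j. om (c i) (c j) = 0"
    and eig: "\<And>j. Adyn \<mu> \<kappa> \<gamma> *v c j = complex_of_real (\<omega> j) *s c j"
  shows "physically_diagonalizable (dynamic_matrix \<mu> \<kappa> \<gamma>)"
proof -
  let ?A = "Adyn \<mu> \<kappa> \<gamma>" and ?D = "dynamic_matrix \<mu> \<kappa> \<gamma>"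
  let ?W = "Wm c" and ?K = "Km c" and ?L = "Lam \<omega>"
  have KW: "?K ** ?W = mat 1" by (rule KW[OF o1 o2])
  have WK: "?W ** ?K = mat 1" by (rule Wm_inv(1)[OF o1 o2])
  have eig2: "?A *v cv (c j) = complex_of_real (- \<omega> j) *s cv (c j)" for j
    using A_conj[of \<mu> \<kappa> \<gamma> "c j"] eig[of j] by (simp add: cv_scale)
  have AW: "?A ** ?W = ?W ** ?L"
  proof (rule mat_eq_cols)
    fix l
    have "column l (?A ** ?W) = ?A *v colW c l" by (simp add: column_mult column_Wm)
    also have "\<dots> = lamW \<omega> l *s colW c l"
      by (cases l) (simp_all add: colW_def lamW_def eig eig2)
    also have "\<dots> = column l (?W ** ?L)"
      by (simp add: diag_mult_column[of ?L] Lam_off Lam_diag column_Wm)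
    finally show "column l (?A ** ?W) = column l (?W ** ?L)" .
  qed
  have KAW: "?K ** ?A ** ?W = ?L"
    by (simp add: matrix_mul_assoc[symmetric] AW) (simp add: matrix_mul_assoc KW)
  define P where "P = transpose ?K"
  have P1: "transpose ?W ** P = mat 1" unfolding P_def by (rule transpose_inv[OF KW])
  have P2: "P ** transpose ?W = mat 1" unfolding P_def by (rule transpose_inv[OF WK])
  have Pinv: "invertible P" using P1 P2 unfolding invertible_def by blast
  have mP: "matrix_inv P = transpose ?W" by (rule minv_unique[OF P2 P1])
  have DT: "?D = transpose ?A" by (simp add: Adyn_def)
  have diagP: "matrix_inv P ** ?D ** P = ?L"
  proof -
    have "matrix_inv P ** ?D ** P = transpose (?K ** ?A ** ?W)"
      unfolding mP by (simp add: DT P_def matrix_transpose_mul matrix_mul_assoc)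
    also have "\<dots> = ?L" by (simp add: KAW diag_transpose[of ?L] Lam_off)
    finally show ?thesis .
  qed
  have dg: "diagonalizable_C ?D"
    unfolding diagonalizable_C_def using Pinv diagP Lam_off by metis
  have WD: "transpose ?W ** ?D = ?L ** transpose ?W"
  proof -
    have "transpose ?W ** ?D = transpose ?W ** ?D ** (P ** transpose ?W)" by (simp add: P2)
    also have "\<dots> = (matrix_inv P ** ?D ** P) ** transpose ?W" by (simp add: mP matrix_mul_assoc)
    finally show ?thesis by (simp add: diagP)
  qed
  have real: "e \<in> \<real>" if v: "v \<noteq> 0" "?D *v v = e *s v" for e v
  proof -
    define u where "u = transpose ?W *v v"
    have "?L *v u = (?L ** transpose ?W) *v v" by (simp only: u_def matrix_vector_mul_assoc)
    also have "\<dots> = (transpose ?W ** ?D) *v v" by (simp only: WD)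
    also have "\<dots> = transpose ?W *v (?D *v v)" by (simp only: matrix_vector_mul_assoc)
    also have "\<dots> = e *s u" by (simp only: v(2) mv_scale u_def)
    finally have Lu: "?L *v u = e *s u" .
    have "u \<noteq> 0"
    proof
      assume "u = 0"
      then have "P *v u = 0" by simp
      moreover have "P *v u = v" by (simp only: u_def matrix_vector_mul_assoc P2 matrix_vector_mul_lid)
      ultimately show False using v by simp
    qed
    then obtain a where ua: "u $ a \<noteq> 0" by (auto simp: vec_eq_iff)
    have "(?L *v u) $ a = lamW \<omega> a * u $ a"
      unfolding matrix_vector_mult_def
      by (simp, rule trans[OF sum.remove[of UNIV a]]) (auto simp: Lam_off Lam_diag)
    then have "lamW \<omega> a * u $ a = e * u $ a" using Lu by (simp add: vec_eq_iff) (metis eq_commute)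
    then have "e = lamW \<omega> a" using ua by simp
    then show ?thesis by (cases a) (auto simp: lamW_def)
  qed
  show ?thesis unfolding physically_diagonalizable_def using dg real by blast
qed



context qsys begin

lemma emb_delta: "emb (if i = j then 1 else 0) = (if i = j then 1 else 0)"
  by (simp add: emb1 emb0)

lemma dirac_imp_phys:
  fixes \<mu> \<kappa> \<gamma> :: "real^'n^'n"
  assumes sym: "transpose \<mu> = \<mu>" "transpose \<kappa> = \<kappa>"
    and dd: "dirac_diagonalizable emb adj p q (hamiltonian emb p q \<mu> \<kappa> \<gamma>)"
  shows "physically_diagonalizable (dynamic_matrix \<mu> \<kappa> \<gamma>)"
proof -
  obtain d :: "'n \<Rightarrow> 'a" and \<omega> :: "'n \<Rightarrow> real" and C :: real where
    dl: "\<forall>i. \<exists>c. d i = lin_comb emb p q c"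
    and dc1: "\<forall>i j. commutator (d i) (adj (d j)) = (if i = j then 1 else 0)"
    and dc2: "\<forall>i j. commutator (d i) (d j) = 0"
    and H: "hamiltonian emb p q \<mu> \<kappa> \<gamma> = (\<Sum>i\<in>UNIV. emb (of_real (\<omega> i)) * adj (d i) * d i) + emb (of_real C)"
    using dd unfolding dirac_diagonalizable_def by blast
  from dl have "\<exists>cf. \<forall>i. d i = lin_comb emb p q (cf i)" by (rule choice)
  then obtain cf where cf: "\<And>i. d i = lin_comb emb p q (cf i)" by blast
  define c where "c i = (\<chi> k. cf i k)" for i
  have dL: "d i = Lv (c i)" for i by (simp add: cf lin_comb_def Lv_def c_def)
  have o1: "om (c i) (cv (c j)) = (if i = j then 1 else 0)" for i j
  proof -
    have "emb (om (c i) (cv (c j))) = emb (if i = j then 1 else 0)"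
      using dc1 by (simp add: dL adj_L L_comm emb_delta)
    then show ?thesis by (simp only: emb_inj)
  qed
  have o2: "om (c i) (c j) = 0" for i j
  proof -
    have "emb (om (c i) (c j)) = emb 0"
      using dc2 by (simp add: dL L_comm emb0)
    then show ?thesis by (simp only: emb_inj)
  qed
  have eig: "Adyn \<mu> \<kappa> \<gamma> *v c j = complex_of_real (\<omega> j) *s c j" for j
  proof -
    have "commutator (d j) (hamiltonian emb p q \<mu> \<kappa> \<gamma>) = Lv (Adyn \<mu> \<kappa> \<gamma> *v c j)"
      by (simp add: ham_Q dL LQ[OF sym])
    moreover have "commutator (d j) (hamiltonian emb p q \<mu> \<kappa> \<gamma>) = emb (of_real (\<omega> j)) * d j"
    proof -
      have "commutator (d j) (hamiltonian emb p q \<mu> \<kappa> \<gamma>)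
        = (\<Sum>i\<in>UNIV. emb (complex_of_real (\<omega> i) * (if j = i then 1 else 0)) * d i
             + emb (complex_of_real (\<omega> i) * 0) * adj (d i))"
        unfolding H comm_add2 comm_embc add_0_right
        by (rule comm_HD) (simp_all add: dL L_comm adj_L o1 o2 emb0)
      also have "\<dots> = (\<Sum>i\<in>UNIV. if j = i then emb (complex_of_real (\<omega> i)) * d i else 0)"
        by (intro sum.cong refl) (simp add: emb0)
      finally show ?thesis by simp
    qed
    ultimately have "Lv (Adyn \<mu> \<kappa> \<gamma> *v c j) = Lv (complex_of_real (\<omega> j) *s c j)"
      by (simp add: L_scale dL)
    then have "Lv (Adyn \<mu> \<kappa> \<gamma> *v c j - complex_of_real (\<omega> j) *s c j) = 0"
      by (simp add: L_diff)
    then show ?thesis using L_inj by fastforce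
  qed
  show ?thesis by (rule matrix_side[OF o1 o2 eig])
qed

end


lemma axis_col: "(P::complex^'n::finite^'m::finite) *v axis a 1 = column a P"
proof -
  have "(\<Sum>k\<in>UNIV. P$i$k * axis a 1 $ k) = P$i$a" for i
    by (simp add: axis_def)
  then show ?thesis by (simp add: matrix_vector_mult_def column_def vec_eq_iff)
qed

lemma swap_anti_zero:
  fixes f :: "'k::finite \<Rightarrow> 'k \<Rightarrow> complex"
  assumes "\<And>k l. f l k = - f k l"
  shows "(\<Sum>k\<in>UNIV. \<Sum>l\<in>UNIV. f k l) = 0"
proof -
  have "(\<Sum>k\<in>UNIV. \<Sum>l\<in>UNIV. f k l) = (\<Sum>l\<in>UNIV. \<Sum>k\<in>UNIV. f k l)" by (rule sum.swap)
  also have "\<dots> = (\<Sum>l\<in>UNIV. \<Sum>k\<in>UNIV. - f l k)"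
    by (intro sum.cong refl) (rule assms)
  also have "\<dots> = - (\<Sum>k\<in>UNIV. \<Sum>l\<in>UNIV. f k l)"
    by (simp only: sum_negf)
  finally show ?thesis by simp
qed

lemma diag_data:
  fixes D :: "complex^'m::finite^'m"
  assumes pd: "physically_diagonalizable D"
  obtains R :: "complex^'m^'m" and lam :: "'m \<Rightarrow> real" where "invertible R" "\<And>a. transpose D *v column a R = complex_of_real (lam a) *s column a R"
proof -
  obtain P :: "complex^'m^'m" where Pinv: "invertible P" and off: "\<And>i j. i \<noteq> j \<Longrightarrow> (matrix_inv P ** D ** P) $ i $ j = 0"
    using pd unfolding physically_diagonalizable_def diagonalizable_C_def by blast
  define L where "L = matrix_inv P ** D ** P"
  have off': "\<And>i j. i \<noteq> j \<Longrightarrow> L $ i $ j = 0" using off by (simp add: L_def)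
  have DP: "D ** P = P ** L"
    by (simp add: L_def matrix_mul_assoc minv[OF Pinv])
  have colP: "D *v column a P = L$a$a *s column a P" for a
  proof -
    have "D *v column a P = column a (D ** P)" by (simp only: column_mult)
    also have "\<dots> = column a (P ** L)" by (simp only: DP)
    also have "\<dots> = L$a$a *s column a P" by (rule diag_mult_column[OF off'])
    finally show ?thesis .
  qed
  have colnz: "column a P \<noteq> 0" for a
  proof
    assume "column a P = 0"
    then have "P *v axis a 1 = 0" by (simp add: axis_col)
    then have "matrix_inv P *v (P *v axis a 1) = 0" by simp
    then have "axis a (1::complex) = 0" by (simp add: matrix_vector_mul_assoc minv[OF Pinv])
    then show False by (simp add: axis_eq_0_iff)
  qed
  have eigreal: "\<And>e v. v \<noteq> 0 \<Longrightarrow> D *v v = e *s v \<Longrightarrow> e \<in> \<real>"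
    using pd unfolding physically_diagonalizable_def by blast
  have realL: "L$a$a \<in> \<real>" for a
    by (rule eigreal[OF colnz colP])
  define lam where "lam a = Re (L$a$a)" for a
  have Llam: "L$a$a = complex_of_real (lam a)" for a
    using realL[of a] unfolding lam_def by (simp add: complex_is_Real_iff complex_eq_iff)
  define R where "R = transpose (matrix_inv P)"
  have R1: "R ** transpose P = mat 1" unfolding R_def by (rule transpose_inv[OF minv(1)[OF Pinv]])
  have R2: "transpose P ** R = mat 1" unfolding R_def by (rule transpose_inv[OF minv(2)[OF Pinv]])
  have Rinv: "invertible R" using R1 R2 unfolding invertible_def by blast
  have LP: "matrix_inv P ** D = L ** matrix_inv P"
    by (simp add: L_def matrix_mul_assoc[symmetric] minv[OF Pinv])
  have AR: "transpose D ** R = R ** L"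
  proof -
    have "transpose D ** R = transpose (matrix_inv P ** D)"
      by (simp add: R_def matrix_transpose_mul)
    also have "\<dots> = R ** transpose L" by (simp add: LP R_def matrix_transpose_mul)
    moreover have "transpose L = L" by (rule diag_transpose[OF off'])
    ultimately show ?thesis by simp
  qed
  have "transpose D *v column a R = complex_of_real (lam a) *s column a R" for a
  proof -
    have "transpose D *v column a R = column a (transpose D ** R)" by (simp only: column_mult)
    also have "\<dots> = column a (R ** L)" by (simp only: AR)
    also have "\<dots> = L$a$a *s column a R" by (rule diag_mult_column[OF off'])
    finally show ?thesis by (simp only: Llam)
  qed
  then show ?thesis using that Rinv by blast
qed



context qsys begin

lemma phys_imp_dirac:
  fixes \<mu> \<kappa> \<gamma> :: "real^'n^'n"
  assumes sym: "transpose \<mu> = \<mu>" "transpose \<kappa> = \<kappa>"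
    and pd: "physically_diagonalizable (dynamic_matrix \<mu> \<kappa> \<gamma>)"
  shows "dirac_diagonalizable emb adj p q (hamiltonian emb p q \<mu> \<kappa> \<gamma>)"
proof -
  let ?A = "Adyn \<mu> \<kappa> \<gamma>"
  obtain R :: "complex^('n + 'n)^('n + 'n)" and lam where Rinv: "invertible R"
    and Reig: "\<And>a. transpose (dynamic_matrix \<mu> \<kappa> \<gamma>) *v column a R = complex_of_real (lam a) *s column a R"
    using diag_data[OF pd] by blast
  interpret h: hsa ?A R lam
  proof
    show "\<And>u v. hf u (?A *v v) = hf (?A *v u) v" by (rule A_hf[OF sym])
    show "\<And>v. ?A *v cv v = - cv (?A *v v)" by (rule A_conj)
    show "invertible R" by (rule Rinv)
    show "\<And>a. ?A *v column a R = complex_of_real (lam a) *s column a R"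
      unfolding Adyn_def by (rule Reig)
  qed
  obtain c0 w0 where gd: "good ?A CARD('n) c0 w0" using h.build by blast
  obtain g :: "'n \<Rightarrow> nat" where g: "bij_betw g UNIV {0..<CARD('n)}"
    using ex_bij_betw_finite_nat[of "UNIV :: 'n set"] by auto
  have glt: "g i < CARD('n)" for i using g by (auto simp: bij_betw_def)
  have ginj: "g i = g j \<longleftrightarrow> i = j" for i j using g by (auto simp: bij_betw_def inj_on_def)
  define cc where "cc i = c0 (g i)" for i
  define ww where "ww i = w0 (g i)" for i
  have eig: "?A *v cc i = complex_of_real (ww i) *s cc i" for i
    using gd glt unfolding good_def cc_def ww_def by blast
  have hfc: "hf (cc i) (cc j) = (if i = j then -1 else 0)" for i j
    using gd glt[of i] glt[of j] unfolding good_def cc_def by (simp add: ginj)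
  have o2: "om (cc i) (cc j) = 0" for i j
    using gd glt[of i] glt[of j] unfolding good_def cc_def by blast
  have o1: "om (cc i) (cv (cc j)) = (if i = j then 1 else 0)" for i j
  proof -
    have "om (cc i) (cv (cc j)) = - cnj (om (cv (cc i)) (cc j))"
      using om_cv[of "cv (cc i)" "cc j"] by (simp only: cv_cv)
    also have "\<dots> = - cnj (hf (cc i) (cc j))" by (simp add: hf_def)
    finally show ?thesis by (simp add: hfc)
  qed
  have o3: "om (cv (cc j)) (cc i) = - (if i = j then 1 else 0)" for i j
    using om_anti[of "cv (cc j)" "cc i"] o1[of i j] by simp
  have o4: "om (cv (cc j)) (cv (cc i)) = 0" for i j
    using om_cv[of "cc j" "cc i"] o2[of j i] by simp
  define d where "d i = Lv (cc i)" for i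
  have dlin: "\<forall>i. \<exists>c. d i = lin_comb emb p q c"
    unfolding d_def Lv_def lin_comb_def by blast
  have dc1: "\<forall>i j. commutator (d i) (adj (d j)) = (if i = j then 1 else 0)"
    by (simp add: d_def adj_L L_comm o1 emb1 emb0)
  have dc2: "\<forall>i j. commutator (d i) (d j) = 0"
    by (simp add: d_def L_comm o2 emb0)
  define Sd where "Sd = (\<Sum>i\<in>UNIV. emb (of_real (ww i)) * adj (d i) * d i)"
  define N where "N = Mh \<mu> \<kappa> \<gamma> - (\<Sum>i\<in>UNIV. (\<chi> k l. complex_of_real (ww i) * (cnj (cc i $ k) * cc i $ l)))"
  have SdQ: "Sd = Qf (\<Sum>i\<in>UNIV. (\<chi> k l. complex_of_real (ww i) * (cnj (cc i $ k) * cc i $ l)))"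
    unfolding Sd_def Q_sum
    by (intro sum.cong refl) (simp add: mult.assoc d_def adjL_L Q_scale)
  have XQ: "hamiltonian emb p q \<mu> \<kappa> \<gamma> - Sd = Qf N"
    by (simp add: N_def Q_diff SdQ ham_Q)
  have cH: "commutator (Lv v) (hamiltonian emb p q \<mu> \<kappa> \<gamma>) = Lv (?A *v v)" for v
    by (simp add: ham_Q LQ[OF sym])
  have cX: "commutator (Lv (colW cc l)) (Qf N) = 0" for l
  proof (cases l)
    case (Inl j)
    have "commutator (d j) Sd = (\<Sum>i\<in>UNIV. emb (complex_of_real (ww i) * (if i = j then 1 else 0)) * d i
             + emb (complex_of_real (ww i) * 0) * adj (d i))"
      unfolding Sd_def by (rule comm_HD) (simp_all add: d_def L_comm adj_L o1 o2 emb0)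
    also have "\<dots> = (\<Sum>i\<in>UNIV. if i = j then emb (complex_of_real (ww i)) * d i else 0)"
      by (intro sum.cong refl) (simp add: emb0)
    finally have "commutator (d j) Sd = emb (complex_of_real (ww j)) * d j" by simp
    moreover have "commutator (d j) (hamiltonian emb p q \<mu> \<kappa> \<gamma>) = emb (complex_of_real (ww j)) * d j"
      by (simp add: d_def cH eig L_scale)
    ultimately have "commutator (d j) (hamiltonian emb p q \<mu> \<kappa> \<gamma> - Sd) = 0"
      by (simp add: comm_diff2)
    then show ?thesis using Inl by (simp add: XQ[symmetric] colW_def d_def)
  next
    case (Inr j)
    have adL: "adj (d j) = Lv (cv (cc j))" by (simp add: d_def adj_L)
    have "commutator (adj (d j)) Sd = (\<Sum>i\<in>UNIV. emb (complex_of_real (ww i) * 0) * d i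
             + emb (complex_of_real (ww i) * - (if i = j then 1 else 0)) * adj (d i))"
      unfolding Sd_def by (rule comm_HD) (simp_all add: adL d_def L_comm adj_L o3 o4 emb0)
    also have "\<dots> = (\<Sum>i\<in>UNIV. if i = j then emb (complex_of_real (- ww i)) * adj (d i) else 0)"
      by (intro sum.cong refl) (simp add: emb0)
    finally have "commutator (adj (d j)) Sd = emb (complex_of_real (- ww j)) * adj (d j)" by simp
    moreover have "commutator (adj (d j)) (hamiltonian emb p q \<mu> \<kappa> \<gamma>) = emb (complex_of_real (- ww j)) * adj (d j)"
    proof -
      have "?A *v cv (cc j) = complex_of_real (- ww j) *s cv (cc j)"
        using A_conj[of \<mu> \<kappa> \<gamma> "cc j"] eig[of j] by (simp add: cv_scale)
      then show ?thesis by (simp add: adL cH L_scale L_minus emb_minus)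
    qed
    ultimately have "commutator (adj (d j)) (hamiltonian emb p q \<mu> \<kappa> \<gamma> - Sd) = 0"
      by (simp add: comm_diff2)
    then show ?thesis using Inr by (simp add: XQ[symmetric] colW_def adL)
  qed
  have cphi: "commutator (phi p q m) (Qf N) = 0" for m
  proof -
    have "phi p q m = Lv (\<Sum>l\<in>UNIV. (Km cc *v axis m 1)$l *s colW cc l)"
      using Wm_span[OF o1 o2, of "axis m 1"] L_axis[of m] by simp
    also have "\<dots> = (\<Sum>l\<in>UNIV. emb ((Km cc *v axis m 1)$l) * Lv (colW cc l))"
      by (simp add: L_sum L_scale)
    finally show ?thesis by (simp add: comm_sum1 comm_emb1 cX)
  qed
  have X: "Qf N = emb ((\<Sum>k\<in>UNIV. \<Sum>l\<in>UNIV. N$k$l * sigma_y$k$l) / 2)"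
    by (rule Q_scalar[OF cphi])
  have Ssum: "(\<Sum>k\<in>UNIV. \<Sum>l\<in>UNIV. N$k$l * sigma_y$k$l) = complex_of_real (\<Sum>i\<in>UNIV. ww i)"
  proof -
    have Mz: "(\<Sum>k\<in>UNIV. \<Sum>l\<in>UNIV. Mh \<mu> \<kappa> \<gamma>$k$l * sigma_y$k$l) = 0"
    proof (rule swap_anti_zero)
      fix k l
      have "transpose (block_M \<mu> \<kappa> \<gamma>) $ k $ l = block_M \<mu> \<kappa> \<gamma> $ k $ l" using M_T[OF sym] by simp
      then have m: "Mh \<mu> \<kappa> \<gamma>$l$k = Mh \<mu> \<kappa> \<gamma>$k$l" by (simp add: transpose_def Mh_def)
      have s: "sigma_y$l$k = - (sigma_y :: complex^('n + 'n)^('n + 'n))$k$l"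
        by (cases k; cases l) auto
      show "Mh \<mu> \<kappa> \<gamma>$l$k * sigma_y$l$k = - (Mh \<mu> \<kappa> \<gamma>$k$l * sigma_y$k$l)" by (simp add: m s)
    qed
    have hh: "(\<Sum>k\<in>UNIV. \<Sum>l\<in>UNIV. cnj (cc i $ k) * cc i $ l * sigma_y$k$l) = -1" for i
      using hfc[of i i] by (simp add: hf_def om_def mult_ac)
    have Nkl: "N$k$l = Mh \<mu> \<kappa> \<gamma>$k$l - (\<Sum>i\<in>UNIV. complex_of_real (ww i) * (cnj (cc i $ k) * cc i $ l))" for k l
      by (simp add: N_def sum_component)
    have "(\<Sum>k\<in>UNIV. \<Sum>l\<in>UNIV. N$k$l * sigma_y$k$l)
       = (\<Sum>k\<in>UNIV. \<Sum>l\<in>UNIV. Mh \<mu> \<kappa> \<gamma>$k$l * sigma_y$k$l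
           - (\<Sum>i\<in>UNIV. complex_of_real (ww i) * (cnj (cc i $ k) * cc i $ l * sigma_y$k$l)))"
      by (intro sum.cong refl) (simp only: Nkl left_diff_distrib sum_distrib_right mult.assoc)
    also have "\<dots> = (\<Sum>k\<in>UNIV. \<Sum>l\<in>UNIV. Mh \<mu> \<kappa> \<gamma>$k$l * sigma_y$k$l)
         - (\<Sum>k\<in>UNIV. \<Sum>l\<in>UNIV. \<Sum>i\<in>UNIV. complex_of_real (ww i) * (cnj (cc i $ k) * cc i $ l * sigma_y$k$l))"
      by (simp only: sum_subtractf)
    finally have part1: "(\<Sum>k\<in>UNIV. \<Sum>l\<in>UNIV. N$k$l * sigma_y$k$l) = (\<Sum>k\<in>UNIV. \<Sum>l\<in>UNIV. Mh \<mu> \<kappa> \<gamma>$k$l * sigma_y$k$l)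
         - (\<Sum>k\<in>UNIV. \<Sum>l\<in>UNIV. \<Sum>i\<in>UNIV. complex_of_real (ww i) * (cnj (cc i $ k) * cc i $ l * sigma_y$k$l))" .
    have "(\<Sum>k\<in>UNIV. \<Sum>l\<in>UNIV. \<Sum>i\<in>UNIV. complex_of_real (ww i) * (cnj (cc i $ k) * cc i $ l * sigma_y$k$l))
        = (\<Sum>k\<in>UNIV. \<Sum>i\<in>UNIV. \<Sum>l\<in>UNIV. complex_of_real (ww i) * (cnj (cc i $ k) * cc i $ l * sigma_y$k$l))"
      by (intro sum.cong refl) (rule sum.swap)
    also have "\<dots> = (\<Sum>i\<in>UNIV. \<Sum>k\<in>UNIV. \<Sum>l\<in>UNIV. complex_of_real (ww i) * (cnj (cc i $ k) * cc i $ l * sigma_y$k$l))"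
      by (rule sum.swap)
    also have "\<dots> = (\<Sum>i\<in>UNIV. complex_of_real (ww i) * (\<Sum>k\<in>UNIV. \<Sum>l\<in>UNIV. cnj (cc i $ k) * cc i $ l * sigma_y$k$l))"
      by (simp only: sum_distrib_left)
    also have "\<dots> = - complex_of_real (\<Sum>i\<in>UNIV. ww i)" by (simp add: hh sum_negf)
    finally show ?thesis using part1 Mz by simp
  qed
  have "hamiltonian emb p q \<mu> \<kappa> \<gamma> = Sd + emb (of_real ((\<Sum>i\<in>UNIV. ww i) / 2))"
  proof -
    have "hamiltonian emb p q \<mu> \<kappa> \<gamma> - Sd = emb (of_real ((\<Sum>i\<in>UNIV. ww i) / 2))"
      by (simp add: XQ X Ssum)
    then show ?thesis by (simp add: algebra_simps)
  qed
  then show ?thesis unfolding dirac_diagonalizable_def Sd_def using dlin dc1 dc2 by blast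
qed

end


theorem theorem5:
  fixes emb :: "complex \<Rightarrow> 'a::ring_1" and adj :: "'a \<Rightarrow> 'a"
    and p q :: "'n::finite \<Rightarrow> 'a"
    and \<mu> \<kappa> \<gamma> :: "real^'n^'n"
  assumes "star_algebra emb adj"
    and "canonical_pq emb adj p q"
    and "transpose \<mu> = \<mu>" and "transpose \<kappa> = \<kappa>"
  shows "dirac_diagonalizable emb adj p q (hamiltonian emb p q \<mu> \<kappa> \<gamma>)
         \<longleftrightarrow> physically_diagonalizable (dynamic_matrix \<mu> \<kappa> \<gamma>)"
proof -
  interpret qsys emb adj p q using assms(1,2) by unfold_locales
  show ?thesis using dirac_imp_phys[OF assms(3,4)] phys_imp_dirac[OF assms(3,4)] by blast
qed

end
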